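(* Let $u\colon\mathcal{A}\times\mathbb{R}\to\mathbb{R}$ be a utility function which is strictly decreasing in the payment $z$ for each fixed alternative. Then: (1) The preference represented by $u$ is represented by some quasi-linear utility function if and only if there exist a function $v\colon\mathcal{A}\to\mathbb{R}$ and a strictly increasing function $\varphi\colon\mathbb{R}\to\mathbb{R}$ such that $u(a,z)=\varphi(v(a)-z)$ for all $a\in\mathcal{A}$, $z\in\mathbb{R}$. (2) The preference represented by $u$ is pos-represented by some quasi-linear utility function if and only if there exist a function $v\colon\mathcal{A}\to\mathbb{R}$ and a strictly increasing function $\varphi\colon\mathbb{R}\to\mathbb{R}$ such that $u(a,z)=\varphi(v(a)-z)$ for all $a\in\mathcal{A}$ and all $z\leqslant v(a)$.
   Context: $\mathcal{A}$ is a finite set of alternatives. A preference is a complete, transitive binary relation $\succcurlyeq$ on $\mathcal{A}\times\mathbb{R}$, where $(a,z)$ means alternative $a$ is chosen and the agent pays $z$. A function $u$ represents $\succcurlyeq$ if for all $a,b\in\mathcal{A}$, $z_a,z_b\in\mathbb{R}$: $(a,z_a)\succcurlyeq(b,z_b)\iff u(a,z_a)\geqslant u(b,z_b)$. A function $u$ pos-represents $\succcurlyeq$ if this equivalence holds for all $a,b,z_a,z_b$ with $u(a,z_a)\geqslant0$ or $u(b,z_b)\geqslant0$. A utility function is quasi-linear if $u(a,z)=v(a)-z$ for some $v\colon\mathcal{A}\to\mathbb{R}$. *)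

theory Defs
  imports Complex_Main
begin

text \<open>Alternatives form a finite type 'a; an outcome is a pair (a, z): alternative a, payment z.
  Utility functions are written curried: u a z = u(a,z).\<close>

definition pref_of :: "('a \<Rightarrow> real \<Rightarrow> real) \<Rightarrow> ('a \<times> real) \<Rightarrow> ('a \<times> real) \<Rightarrow> bool" where
  "pref_of u = (\<lambda>(a, za) (b, zb). u a za \<ge> u b zb)"

definition represents :: "('a \<Rightarrow> real \<Rightarrow> real) \<Rightarrow> (('a \<times> real) \<Rightarrow> ('a \<times> real) \<Rightarrow> bool) \<Rightarrow> bool" where
  "represents u R \<longleftrightarrow> (\<forall>a b za zb. R (a, za) (b, zb) \<longleftrightarrow> u a za \<ge> u b zb)"

definition pos_represents :: "('a \<Rightarrow> real \<Rightarrow> real) \<Rightarrow> (('a \<times> real) \<Rightarrow> ('a \<times> real) \<Rightarrow> bool) \<Rightarrow> bool" where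
  "pos_represents u R \<longleftrightarrow>
     (\<forall>a b za zb. (u a za \<ge> 0 \<or> u b zb \<ge> 0) \<longrightarrow> (R (a, za) (b, zb) \<longleftrightarrow> u a za \<ge> u b zb))"

definition quasi_linear :: "('a \<Rightarrow> real \<Rightarrow> real) \<Rightarrow> bool" where
  "quasi_linear u \<longleftrightarrow> (\<exists>v. \<forall>a z. u a z = v a - z)"

end

theory Submission
  imports Defs
begin

lemma smono_aux:
  fixes u :: "'a \<Rightarrow> real \<Rightarrow> real"
  assumes decr: "\<And>a z z'. z < z' \<Longrightarrow> u a z' < u a z"
  shows "strict_mono (\<lambda>t. u a0 (c - t))"
  by (rule strict_monoI) (simp add: decr)

theorem theorem4:
  fixes u :: "'a::finite \<Rightarrow> real \<Rightarrow> real"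
  assumes decr: "\<And>a z z'. z < z' \<Longrightarrow> u a z' < u a z"
  shows "((\<exists>w. quasi_linear w \<and> represents w (pref_of u)) \<longleftrightarrow>
           (\<exists>v \<phi>. strict_mono (\<phi> :: real \<Rightarrow> real) \<and> (\<forall>a z. u a z = \<phi> (v a - z))))
       \<and> ((\<exists>w. quasi_linear w \<and> pos_represents w (pref_of u)) \<longleftrightarrow>
           (\<exists>v \<phi>. strict_mono (\<phi> :: real \<Rightarrow> real) \<and> (\<forall>a z. z \<le> v a \<longrightarrow> u a z = \<phi> (v a - z))))"
proof (intro conjI iffI)
  assume "\<exists>w. quasi_linear w \<and> represents w (pref_of u)"
  then obtain v where R: "\<And>a b za zb. u a za \<ge> u b zb \<longleftrightarrow> v a - za \<ge> v b - zb"
    unfolding quasi_linear_def represents_def pref_of_def by auto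
  define a0 :: 'a where "a0 = undefined"
  have "\<forall>a z. u a z = u a0 (v a0 - (v a - z))"
  proof (intro allI)
    fix a z
    show "u a z = u a0 (v a0 - (v a - z))"
      using R[where a=a and za=z and b=a0 and zb="v a0 - (v a - z)"] R[where b=a and zb=z and a=a0 and za="v a0 - (v a - z)"] by linarith
  qed
  moreover have "strict_mono (\<lambda>t. u a0 (v a0 - t))" by (rule strict_monoI) (simp add: decr)
  ultimately show "\<exists>v \<phi>. strict_mono (\<phi> :: real \<Rightarrow> real) \<and> (\<forall>a z. u a z = \<phi> (v a - z))" by blast
next
  assume "\<exists>v \<phi>. strict_mono (\<phi> :: real \<Rightarrow> real) \<and> (\<forall>a z. u a z = \<phi> (v a - z))"
  then obtain v and \<phi> :: "real \<Rightarrow> real" where m: "strict_mono \<phi>" and e: "\<And>a z. u a z = \<phi> (v a - z)"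
    by blast
  have "quasi_linear (\<lambda>a z. v a - z)" unfolding quasi_linear_def by blast
  moreover have "represents (\<lambda>a z. v a - z) (pref_of u)"
    unfolding represents_def pref_of_def using m by (simp add: e strict_mono_less_eq)
  ultimately show "\<exists>w. quasi_linear w \<and> represents w (pref_of u)" by blast
next
  assume "\<exists>w. quasi_linear w \<and> pos_represents w (pref_of u)"
  then obtain v where R: "\<And>a b za zb. za \<le> v a \<or> zb \<le> v b \<Longrightarrow>
      u a za \<ge> u b zb \<longleftrightarrow> v a - za \<ge> v b - zb"
    unfolding quasi_linear_def pos_represents_def pref_of_def by (auto; blast)
  define a0 :: 'a where "a0 = undefined"
  have "\<forall>a z. z \<le> v a \<longrightarrow> u a z = u a0 (v a0 - (v a - z))"
  proof (intro allI impI)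
    fix a z assume "z \<le> v a"
    then show "u a z = u a0 (v a0 - (v a - z))"
      using R[where a=a and za=z and b=a0 and zb="v a0 - (v a - z)"] R[where b=a and zb=z and a=a0 and za="v a0 - (v a - z)"] by linarith
  qed
  moreover have "strict_mono (\<lambda>t. u a0 (v a0 - t))" by (rule strict_monoI) (simp add: decr)
  ultimately show "\<exists>v \<phi>. strict_mono (\<phi> :: real \<Rightarrow> real) \<and> (\<forall>a z. z \<le> v a \<longrightarrow> u a z = \<phi> (v a - z))" by blast
next
  assume "\<exists>v \<phi>. strict_mono (\<phi> :: real \<Rightarrow> real) \<and> (\<forall>a z. z \<le> v a \<longrightarrow> u a z = \<phi> (v a - z))"
  then obtain v and \<phi> :: "real \<Rightarrow> real" where m: "strict_mono \<phi>"
    and e: "\<And>a z. z \<le> v a \<Longrightarrow> u a z = \<phi> (v a - z)"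
    by blast
  have "quasi_linear (\<lambda>a z. v a - z)" unfolding quasi_linear_def by blast
  moreover have "pos_represents (\<lambda>a z. v a - z) (pref_of u)"
    unfolding pos_represents_def pref_of_def
  proof (intro allI impI)
    fix a b za zb
    assume h: "0 \<le> v a - za \<or> 0 \<le> v b - zb"
    have "(u b zb \<le> u a za) = (v b - zb \<le> v a - za)" if "0 \<le> v a - za" "0 \<le> v b - zb"
      using that m by (simp add: e strict_mono_less_eq)
    moreover have "u b zb < u a za" if "0 \<le> v a - za" "\<not> 0 \<le> v b - zb"
    proof -
      have "u b zb < u b (v b)" using decr that by simp
      also have "\<dots> = \<phi> 0" using e[of "v b" b] by simp
      also have "\<dots> \<le> \<phi> (v a - za)" using m that by (simp add: strict_mono_less_eq)
      also have "\<dots> = u a za" using e[of za a] that by simp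
      finally show ?thesis .
    qed
    moreover have "u a za < u b zb" if "0 \<le> v b - zb" "\<not> 0 \<le> v a - za"
    proof -
      have "u a za < u a (v a)" using decr that by simp
      also have "\<dots> = \<phi> 0" using e[of "v a" a] by simp
      also have "\<dots> \<le> \<phi> (v b - zb)" using m that by (simp add: strict_mono_less_eq)
      also have "\<dots> = u b zb" using e[of zb b] that by simp
      finally show ?thesis .
    qed
    ultimately show "(case (a, za) of (a, za) \<Rightarrow> \<lambda>(b, zb). u b zb \<le> u a za) (b, zb) =
       (v b - zb \<le> v a - za)" using h by fastforce
  qed
  ultimately show "\<exists>w. quasi_linear w \<and> pos_represents w (pref_of u)" by blast
qed

end
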